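(* Let $X$ be a regular topological space. Then $X$ is $Scat(X)$-selectively pseudocompact if and only if $X$ is $Disc(X)$-selectively pseudocompact, where $Scat(X)$ is the family of scattered subsets of $X$ and $Disc(X)$ is the family of discrete subsets of $X$.
   Context: For a topological space $X$ and $\mathcal A\subseteq\mathcal P(X)$, $X$ is called $\mathcal A$-selectively pseudocompact if for every sequence $\langle U_n:n\in\omega\rangle$ of pairwise disjoint non-empty open subsets of $X$ one can choose sets $A_n\in\mathcal A$ with $A_n\subseteq U_n$ such that the family $\{A_n:n\in\omega\}$ has an accumulation point, i.e. there is a point $x\in X$ every neighbourhood of which meets $A_n$ for infinitely many $n$. A subset $Y\subseteq X$ is discrete if it is discrete in the subspace topology, and scattered if every non-empty subset of $Y$ has a point isolated in it. *)

theory Defs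
  imports "HOL-Analysis.Analysis"
begin

definition discrete_subset :: "'a topology \<Rightarrow> 'a set \<Rightarrow> bool" where
  "discrete_subset X Y \<longleftrightarrow> Y \<subseteq> topspace X \<and> subtopology X Y = discrete_topology Y"

definition scattered_subset :: "'a topology \<Rightarrow> 'a set \<Rightarrow> bool" where
  "scattered_subset X Y \<longleftrightarrow> Y \<subseteq> topspace X \<and>
     (\<forall>Z. Z \<subseteq> Y \<and> Z \<noteq> {} \<longrightarrow> (\<exists>z\<in>Z. openin (subtopology X Z) {z}))"

definition Disc :: "'a topology \<Rightarrow> 'a set set" where
  "Disc X = {Y. discrete_subset X Y}"

definition Scat :: "'a topology \<Rightarrow> 'a set set" where
  "Scat X = {Y. scattered_subset X Y}"

definition family_accumulation_point :: "'a topology \<Rightarrow> (nat \<Rightarrow> 'a set) \<Rightarrow> 'a \<Rightarrow> bool" where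
  "family_accumulation_point X A x \<longleftrightarrow> x \<in> topspace X \<and>
     (\<forall>U. openin X U \<and> x \<in> U \<longrightarrow> infinite {n. U \<inter> A n \<noteq> {}})"

definition selectively_pseudocompact :: "'a set set \<Rightarrow> 'a topology \<Rightarrow> bool" where
  "selectively_pseudocompact \<A> X \<longleftrightarrow>
     (\<forall>U :: nat \<Rightarrow> 'a set.
        (\<forall>n. openin X (U n) \<and> U n \<noteq> {}) \<and> pairwise (\<lambda>m n. disjnt (U m) (U n)) UNIV
        \<longrightarrow> (\<exists>A. (\<forall>n. A n \<in> \<A> \<and> A n \<subseteq> U n) \<and> (\<exists>x. family_accumulation_point X A x)))"

end

theory Submission
  imports Defs
begin

lemma disc_imp_scat:
  assumes "discrete_subset X Y" shows "scattered_subset X Y"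
  unfolding scattered_subset_def
proof (intro conjI allI impI)
  show "Y \<subseteq> topspace X" using assms by (simp add: discrete_subset_def)
  fix Z assume Z: "Z \<subseteq> Y \<and> Z \<noteq> {}"
  then obtain z where z: "z \<in> Z" by blast
  have "openin (subtopology X Y) {z}"
    using assms z Z by (auto simp: discrete_subset_def)
  then obtain V where V: "openin X V" "{z} = V \<inter> Y" by (auto simp: openin_subtopology)
  then have "{z} = V \<inter> Z" using z Z by blast
  then have "openin (subtopology X Z) {z}" using V(1) by (auto simp: openin_subtopology)
  then show "\<exists>z\<in>Z. openin (subtopology X Z) {z}" using z by blast
qed

lemma scat_isolated:
  assumes "scattered_subset X A"
  defines "D \<equiv> {a \<in> A. openin (subtopology X A) {a}}"
  shows "discrete_subset X D" "D \<subseteq> A"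
    "\<And>W. openin X W \<Longrightarrow> W \<inter> A \<noteq> {} \<Longrightarrow> W \<inter> D \<noteq> {}"
proof -
  show DA: "D \<subseteq> A" by (auto simp: D_def)
  have AX: "A \<subseteq> topspace X" using assms(1) by (simp add: scattered_subset_def)
  have "discrete_topology D = subtopology X D"
    unfolding discrete_topology_unique
  proof (intro conjI ballI)
    show "topspace (subtopology X D) = D" using DA AX by auto
    fix d assume d: "d \<in> D"
    then obtain V where V: "openin X V" "{d} = V \<inter> A" by (auto simp: D_def openin_subtopology)
    then have "{d} = V \<inter> D" using d DA by blast
    then show "openin (subtopology X D) {d}" using V(1) by (auto simp: openin_subtopology)
  qed
  then show "discrete_subset X D" using DA AX by (auto simp: discrete_subset_def)
  fix W assume W: "openin X W" "W \<inter> A \<noteq> {}"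
  then obtain z where z: "z \<in> W \<inter> A" "openin (subtopology X (W \<inter> A)) {z}"
    using assms(1) unfolding scattered_subset_def by (metis Int_lower2)
  then obtain V where V: "openin X V" "{z} = V \<inter> (W \<inter> A)" by (auto simp: openin_subtopology)
  have "{z} = (V \<inter> W) \<inter> A" using V by blast
  moreover have "openin X (V \<inter> W)" using V W by auto
  ultimately have "openin (subtopology X A) {z}" by (auto simp: openin_subtopology)
  then have "z \<in> D" using z by (auto simp: D_def)
  then show "W \<inter> D \<noteq> {}" using z by blast
qed

theorem proposition1p4:
  fixes X :: "'a topology"
  assumes "regular_space X"
  shows "selectively_pseudocompact (Scat X) X \<longleftrightarrow> selectively_pseudocompact (Disc X) X"
proof
  assume S: "selectively_pseudocompact (Scat X) X"
  show "selectively_pseudocompact (Disc X) X"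
    unfolding selectively_pseudocompact_def
  proof (intro allI impI)
    fix U :: "nat \<Rightarrow> 'a set"
    assume U: "(\<forall>n. openin X (U n) \<and> U n \<noteq> {}) \<and> pairwise (\<lambda>m n. disjnt (U m) (U n)) UNIV"
    have "\<exists>A. (\<forall>n. A n \<in> Scat X \<and> A n \<subseteq> U n) \<and> (\<exists>x. family_accumulation_point X A x)"
      using S[unfolded selectively_pseudocompact_def, rule_format, OF U] .
    then obtain A x where A: "\<forall>n. A n \<in> Scat X \<and> A n \<subseteq> U n" "family_accumulation_point X A x"
      by blast
    define D where "D n = {a \<in> A n. openin (subtopology X (A n)) {a}}" for n
    have sc: "scattered_subset X (A n)" for n using A(1) by (simp add: Scat_def)
    note L = scat_isolated[OF sc, folded D_def]
    have "\<forall>n. D n \<in> Disc X \<and> D n \<subseteq> U n"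
    proof
      fix n
      have "D n \<in> Disc X" using L(1)[of n] unfolding Disc_def by blast
      moreover have "D n \<subseteq> U n" using L(2)[of n] A(1) by blast
      ultimately show "D n \<in> Disc X \<and> D n \<subseteq> U n" by blast
    qed
    moreover have "family_accumulation_point X D x"
      unfolding family_accumulation_point_def
    proof (intro conjI allI impI)
      show "x \<in> topspace X" using A(2) by (simp add: family_accumulation_point_def)
      fix W assume W: "openin X W \<and> x \<in> W"
      have "infinite {n. W \<inter> A n \<noteq> {}}" using A(2) W by (simp add: family_accumulation_point_def)
      moreover have "{n. W \<inter> A n \<noteq> {}} \<subseteq> {n. W \<inter> D n \<noteq> {}}" using L(3) W by blast
      ultimately show "infinite {n. W \<inter> D n \<noteq> {}}" using finite_subset by blast
    qed
    ultimately show "\<exists>A. (\<forall>n. A n \<in> Disc X \<and> A n \<subseteq> U n) \<and> (\<exists>x. family_accumulation_point X A x)"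
      by blast
  qed
next
  assume S: "selectively_pseudocompact (Disc X) X"
  have "Disc X \<subseteq> Scat X" using disc_imp_scat by (auto simp: Disc_def Scat_def)
  show "selectively_pseudocompact (Scat X) X"
    unfolding selectively_pseudocompact_def
  proof (intro allI impI)
    fix U :: "nat \<Rightarrow> 'a set"
    assume U: "(\<forall>n. openin X (U n) \<and> U n \<noteq> {}) \<and> pairwise (\<lambda>m n. disjnt (U m) (U n)) UNIV"
    have "\<exists>A. (\<forall>n. A n \<in> Disc X \<and> A n \<subseteq> U n) \<and> (\<exists>x. family_accumulation_point X A x)"
      using S[unfolded selectively_pseudocompact_def, rule_format, OF U] .
    then obtain A x where A: "\<forall>n. A n \<in> Disc X \<and> A n \<subseteq> U n" "family_accumulation_point X A x"
      by blast
    have "\<forall>n. A n \<in> Scat X \<and> A n \<subseteq> U n" using A(1) \<open>Disc X \<subseteq> Scat X\<close> by blast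
    then show "\<exists>A. (\<forall>n. A n \<in> Scat X \<and> A n \<subseteq> U n) \<and> (\<exists>x. family_accumulation_point X A x)"
      using A(2) by blast
  qed
qed

end
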